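(* Each of the following families of graphs is feasible, i.e. for every integer $n \ge 1$ and every integer $m$ with $0 \le m \le \binom{n}{2}$ the family contains a graph with $n$ vertices and $m$ edges: (1) induced $K_{1,r}$-free graphs, for any fixed $r\geq 3$, where $K_{1,r}$ is the star with $r$ leaves; (2) induced $P_r$-free graphs, for any fixed $r \geq 3$, where $P_r$ is the path with $r$ edges; (3) induced $rK_2$-free graphs, for any fixed $r \geq 2$, where $rK_2$ is the disjoint union of $r$ edges; (4) chordal graphs.
   Context: All graphs are finite and simple. A graph is induced $H$-free if it has no induced subgraph isomorphic to $H$. A graph is chordal if every cycle of length at least 4 has a chord. *)

theory Defs
  imports Main
begin

definition simple_graph :: "nat set \<Rightarrow> (nat \<Rightarrow> nat \<Rightarrow> bool) \<Rightarrow> bool" where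
  "simple_graph V E \<longleftrightarrow> finite V \<and> (\<forall>u v. E u v \<longrightarrow> u \<in> V \<and> v \<in> V)
     \<and> (\<forall>u v. E u v \<longrightarrow> E v u) \<and> (\<forall>u. \<not> E u u)"

definition edge_set :: "nat set \<Rightarrow> (nat \<Rightarrow> nat \<Rightarrow> bool) \<Rightarrow> nat set set" where
  "edge_set V E = {{u, v} | u v. u \<in> V \<and> v \<in> V \<and> E u v}"

definition num_edges :: "nat set \<Rightarrow> (nat \<Rightarrow> nat \<Rightarrow> bool) \<Rightarrow> nat" where
  "num_edges V E = card (edge_set V E)"

definition has_induced :: "nat set \<Rightarrow> (nat \<Rightarrow> nat \<Rightarrow> bool) \<Rightarrow> nat set \<Rightarrow> (nat \<Rightarrow> nat \<Rightarrow> bool) \<Rightarrow> bool" where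
  "has_induced V E VH EH \<longleftrightarrow> (\<exists>f. inj_on f VH \<and> f ` VH \<subseteq> V \<and>
     (\<forall>u\<in>VH. \<forall>v\<in>VH. EH u v \<longleftrightarrow> E (f u) (f v)))"

definition induced_free :: "nat set \<Rightarrow> (nat \<Rightarrow> nat \<Rightarrow> bool) \<Rightarrow> nat set \<Rightarrow> (nat \<Rightarrow> nat \<Rightarrow> bool) \<Rightarrow> bool" where
  "induced_free V E VH EH \<longleftrightarrow> \<not> has_induced V E VH EH"

definition star_V :: "nat \<Rightarrow> nat set" where "star_V r = {0..r}"
definition star_E :: "nat \<Rightarrow> nat \<Rightarrow> nat \<Rightarrow> bool" where
  "star_E r u v \<longleftrightarrow> u \<in> {0..r} \<and> v \<in> {0..r} \<and> u \<noteq> v \<and> (u = 0 \<or> v = 0)"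

definition path_V :: "nat \<Rightarrow> nat set" where "path_V r = {0..r}"
definition path_E :: "nat \<Rightarrow> nat \<Rightarrow> nat \<Rightarrow> bool" where
  "path_E r u v \<longleftrightarrow> u \<in> {0..r} \<and> v \<in> {0..r} \<and> (v = Suc u \<or> u = Suc v)"

text \<open>rK_2: vertices 0..2r-1, edges {2i, 2i+1}.\<close>
definition matching_V :: "nat \<Rightarrow> nat set" where "matching_V r = {0..<2*r}"
definition matching_E :: "nat \<Rightarrow> nat \<Rightarrow> nat \<Rightarrow> bool" where
  "matching_E r u v \<longleftrightarrow> u < 2*r \<and> v < 2*r \<and> u \<noteq> v \<and> u div 2 = v div 2"

definition is_cycle :: "nat set \<Rightarrow> (nat \<Rightarrow> nat \<Rightarrow> bool) \<Rightarrow> nat list \<Rightarrow> bool" where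
  "is_cycle V E vs \<longleftrightarrow> length vs \<ge> 3 \<and> distinct vs \<and> set vs \<subseteq> V \<and>
     (\<forall>i < length vs. E (vs ! i) (vs ! ((i + 1) mod length vs)))"

definition has_chord :: "(nat \<Rightarrow> nat \<Rightarrow> bool) \<Rightarrow> nat list \<Rightarrow> bool" where
  "has_chord E vs \<longleftrightarrow> (\<exists>i < length vs. \<exists>j < length vs.
     j \<noteq> (i + 1) mod length vs \<and> i \<noteq> (j + 1) mod length vs \<and> i \<noteq> j \<and>
     E (vs ! i) (vs ! j))"

definition chordal :: "nat set \<Rightarrow> (nat \<Rightarrow> nat \<Rightarrow> bool) \<Rightarrow> bool" where
  "chordal V E \<longleftrightarrow> (\<forall>vs. is_cycle V E vs \<and> length vs \<ge> 4 \<longrightarrow> has_chord E vs)"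

definition feasible :: "(nat set \<Rightarrow> (nat \<Rightarrow> nat \<Rightarrow> bool) \<Rightarrow> bool) \<Rightarrow> bool" where
  "feasible P \<longleftrightarrow> (\<forall>n \<ge> 1. \<forall>m \<le> n choose 2. \<exists>V E.
     simple_graph V E \<and> card V = n \<and> num_edges V E = m \<and> P V E)"

end

theory Submission
  imports Defs
begin

fun T :: "nat \<Rightarrow> nat" where
  "T 0 = 0" | "T (Suc k) = T k + k"

lemma T_choose: "T n = n choose 2"
proof (induction n)
  case 0 then show ?case by simp
next
  case (Suc n)
  have "Suc n choose 2 = (n choose 1) + (n choose 2)"
    using binomial_Suc_Suc[of n 1] by (simp add: numeral_2_eq_2)
  then show ?case using Suc by simp
qed

lemma T_mono: "a \<le> b \<Longrightarrow> T a \<le> T b"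
  by (induction b rule: dec_induct) auto

definition code :: "nat \<Rightarrow> nat \<Rightarrow> nat" where
  "code u v = T (max u v) + min u v"

definition gE :: "nat \<Rightarrow> nat \<Rightarrow> nat \<Rightarrow> nat \<Rightarrow> bool" where
  "gE n m u v \<longleftrightarrow> u < n \<and> v < n \<and> u \<noteq> v \<and> code u v < m"

lemma gE_sym: "gE n m u v \<Longrightarrow> gE n m v u"
  by (auto simp: gE_def code_def max.commute min.commute)

lemma gE_irr: "\<not> gE n m u u"
  by (simp add: gE_def)

lemma code_bounds: "u < v \<Longrightarrow> T v \<le> code u v \<and> code u v < T (Suc v)"
  by (simp add: code_def)

lemma code_inj:
  assumes "u < v" "u' < v'" "code u v = code u' v'"
  shows "u = u' \<and> v = v'"
proof -
  have "v = v'"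
  proof (rule ccontr)
    assume "v \<noteq> v'"
    then consider "v < v'" | "v' < v" by linarith
    then show False
    proof cases
      case 1
      then have "T (Suc v) \<le> T v'" by (intro T_mono) simp
      then show False using code_bounds[OF assms(1)] code_bounds[OF assms(2)] assms(3) by linarith
    next
      case 2
      then have "T (Suc v') \<le> T v" by (intro T_mono) simp
      then show False using code_bounds[OF assms(1)] code_bounds[OF assms(2)] assms(3) by linarith
    qed
  qed
  then show ?thesis using assms by (simp add: code_def)
qed

lemma code_surj: "c < T n \<Longrightarrow> \<exists>u v. u < v \<and> v < n \<and> code u v = c"
proof (induction n arbitrary: c)
  case 0 then show ?case by simp
next
  case (Suc n)
  show ?case
  proof (cases "c < T n")
    case True
    then obtain u v where "u < v" "v < n" "code u v = c" using Suc.IH by blast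
    then show ?thesis by (intro exI[of _ u] exI[of _ v]) auto
  next
    case False
    define u where "u = c - T n"
    have "u < n" "c = T n + u" using False Suc.prems by (auto simp: u_def)
    then show ?thesis by (intro exI[of _ u] exI[of _ n]) (auto simp: code_def)
  qed
qed

lemma clique:
  assumes "gE n m x y" "x < y" "p \<noteq> q" "p < y" "q < y"
  shows "gE n m p q"
proof -
  have "code p q < T (Suc (max p q))" using assms(3) by (simp add: code_def)
  also have "\<dots> \<le> T y" using assms by (intro T_mono) simp
  also have "\<dots> \<le> code x y" using code_bounds[OF assms(2)] by simp
  finally show ?thesis using assms by (auto simp: gE_def)
qed

lemma clique':
  assumes "gE n m x y" "p \<noteq> q" "p < max x y" "q < max x y"
  shows "gE n m p q"
proof (cases "x < y")
  case True then show ?thesis using clique assms by auto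
next
  case False
  then have "y < x" using assms(1) by (auto simp: gE_def)
  then show ?thesis using clique[OF gE_sym[OF assms(1)]] assms by auto
qed

lemma num_edges_gE:
  assumes "m \<le> n choose 2"
  shows "num_edges {0..<n} (gE n m) = m"
proof -
  let ?S = "edge_set {0..<n} (gE n m)"
  define g where "g e = code (Min e) (Max e)" for e :: "nat set"
  have cs: "code u v = code v u" for u v by (simp add: code_def max.commute min.commute)
  have S: "?S = {{u, v} | u v. u < v \<and> v < n \<and> code u v < m}"
  proof
    show "?S \<subseteq> {{u, v} | u v. u < v \<and> v < n \<and> code u v < m}"
    proof
      fix x assume "x \<in> ?S"
      then obtain u v where x: "x = {u, v}" "u < n" "v < n" "u \<noteq> v" "code u v < m"
        unfolding edge_set_def gE_def by blast
      show "x \<in> {{u, v} | u v. u < v \<and> v < n \<and> code u v < m}"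
      proof (cases "u < v")
        case True then show ?thesis using x by blast
      next
        case False
        then have "v < u" "x = {v, u}" "code v u < m" using x cs by auto
        then show ?thesis using x by blast
      qed
    qed
  next
    show "{{u, v} | u v. u < v \<and> v < n \<and> code u v < m} \<subseteq> ?S"
      unfolding edge_set_def gE_def by force
  qed
  have gS: "g {u, v} = code u v" if "u < v" for u v
    using that by (simp add: g_def code_def)
  have inj: "inj_on g ?S"
  proof (rule inj_onI)
    fix a b assume "a \<in> ?S" "b \<in> ?S" "g a = g b"
    then obtain u v u' v' where uv: "a = {u, v}" "u < v" "b = {u', v'}" "u' < v'"
      by (auto simp: S)
    then have "code u v = code u' v'" using \<open>g a = g b\<close> gS by simp
    then have "u = u' \<and> v = v'" using code_inj uv by blast
    then show "a = b" using uv by simp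
  qed
  have img: "g ` ?S = {0..<m}"
  proof
    show "g ` ?S \<subseteq> {0..<m}" by (auto simp: S gS)
  next
    show "{0..<m} \<subseteq> g ` ?S"
    proof
      fix c assume "c \<in> {0..<m}"
      then have "c < T n" using assms T_choose by simp
      then obtain u v where uv: "u < v" "v < n" "code u v = c" using code_surj by blast
      then have "{u, v} \<in> ?S" using \<open>c \<in> {0..<m}\<close> by (auto simp: S)
      then show "c \<in> g ` ?S" using gS uv by force
    qed
  qed
  show ?thesis unfolding num_edges_def
    using card_image[OF inj] img by simp
qed

lemma restrict:
  assumes "has_induced V E VH EH" "VH' \<subseteq> VH" "\<forall>u\<in>VH'. \<forall>v\<in>VH'. EH' u v = EH u v"
  shows "has_induced V E VH' EH'"
  using assms unfolding has_induced_def by (meson inj_on_subset image_mono subset_trans subsetD)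

lemma max_lemma:
  assumes fin: "finite S" and ne: "S \<noteq> {}"
    and nb: "\<forall>x\<in>S. \<exists>y\<in>S. gE n m x y"
    and nn: "\<forall>x\<in>S. \<exists>p\<in>S-{x}. \<exists>q\<in>S-{x}. p \<noteq> q \<and> \<not> gE n m p q"
  shows False
proof -
  define M where "M = Max S"
  have MS: "M \<in> S" using fin ne by (simp add: M_def)
  obtain y where "y \<in> S" "gE n m M y" using nb MS by blast
  obtain p q where pq: "p \<in> S-{M}" "q \<in> S-{M}" "p \<noteq> q" "\<not> gE n m p q" using nn MS by blast
  have "p < M" "q < M" using pq fin by (auto simp: M_def order.not_eq_order_implies_strict)
  then have "gE n m p q" using clique'[OF \<open>gE n m M y\<close> \<open>p \<noteq> q\<close>] by auto
  then show False using pq by simp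
qed

lemma four:
  assumes "\<forall>x\<in>{a,b,c,d}. \<exists>y\<in>{a,b,c,d}. gE n m x y"
    and "\<forall>x\<in>{a,b,c,d}. \<exists>p\<in>{a,b,c,d}-{x}. \<exists>q\<in>{a,b,c,d}-{x}. p \<noteq> q \<and> \<not> gE n m p q"
  shows False
  using max_lemma[of "{a,b,c,d}" n m] assms by blast

lemma no_claw: "\<not> has_induced {0..<n} (gE n m) (star_V 3) (star_E 3)"
proof
  assume "has_induced {0..<n} (gE n m) (star_V 3) (star_E 3)"
  then obtain f where inj: "inj_on f {0..3}" and
    r: "\<forall>u\<in>{0..3}. \<forall>v\<in>{0..3}. star_E 3 u v \<longleftrightarrow> gE n m (f u) (f v)"
    by (auto simp: has_induced_def star_V_def)
  have r': "star_E 3 u v \<longleftrightarrow> gE n m (f u) (f v)" if "u \<le> 3" "v \<le> 3" for u v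
    using r that by auto
  let ?E = "gE n m"
  have e: "?E (f 0) (f 1)" "?E (f 0) (f 2)" "?E (f 0) (f 3)"
    "\<not> ?E (f 1) (f 2)" "\<not> ?E (f 1) (f 3)" "\<not> ?E (f 2) (f 3)"
    using r'[of 0 1] r'[of 0 2] r'[of 0 3] r'[of 1 2] r'[of 1 3] r'[of 2 3]
    by (auto simp: star_E_def)
  have d: "f 1 \<noteq> f 2" "f 1 \<noteq> f 3" "f 2 \<noteq> f 3"
    using inj_onD[OF inj, of 1 2] inj_onD[OF inj, of 1 3] inj_onD[OF inj, of 2 3] by auto
  show False
    apply (rule four[of "f 0" "f 1" "f 2" "f 3" n m])
    using e d gE_sym gE_irr by (auto 0 3)
qed

lemma no_P4: "\<not> has_induced {0..<n} (gE n m) (path_V 3) (path_E 3)"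
proof
  assume "has_induced {0..<n} (gE n m) (path_V 3) (path_E 3)"
  then obtain f where inj: "inj_on f {0..3}" and
    r: "\<forall>u\<in>{0..3}. \<forall>v\<in>{0..3}. path_E 3 u v \<longleftrightarrow> gE n m (f u) (f v)"
    by (auto simp: has_induced_def path_V_def)
  have r': "path_E 3 u v \<longleftrightarrow> gE n m (f u) (f v)" if "u \<le> 3" "v \<le> 3" for u v
    using r that by auto
  let ?E = "gE n m"
  have e: "?E (f 0) (f 1)" "?E (f 1) (f 2)" "?E (f 2) (f 3)"
    "\<not> ?E (f 0) (f 2)" "\<not> ?E (f 1) (f 3)" "\<not> ?E (f 0) (f 3)"
    using r'[of 0 1] r'[of 1 2] r'[of 2 3] r'[of 0 2] r'[of 1 3] r'[of 0 3]
    by (auto simp: path_E_def)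
  have d: "f 0 \<noteq> f 2" "f 1 \<noteq> f 3" "f 0 \<noteq> f 3"
    using inj_onD[OF inj, of 0 2] inj_onD[OF inj, of 1 3] inj_onD[OF inj, of 0 3] by auto
  show False
    apply (rule four[of "f 0" "f 1" "f 2" "f 3" n m])
    using e d gE_sym gE_irr by (auto 0 3)
qed

lemma no_2K2: "\<not> has_induced {0..<n} (gE n m) (matching_V 2) (matching_E 2)"
proof
  assume "has_induced {0..<n} (gE n m) (matching_V 2) (matching_E 2)"
  then obtain f where inj: "inj_on f {0..<4}" and
    r: "\<forall>u\<in>{0..<4}. \<forall>v\<in>{0..<4}. matching_E 2 u v \<longleftrightarrow> gE n m (f u) (f v)"
    by (auto simp: has_induced_def matching_V_def)
  have r': "matching_E 2 u v \<longleftrightarrow> gE n m (f u) (f v)" if "u < 4" "v < 4" for u v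
    using r that by auto
  let ?E = "gE n m"
  have e: "?E (f 0) (f 1)" "?E (f 2) (f 3)" "\<not> ?E (f 1) (f 2)"
    "\<not> ?E (f 0) (f 2)" "\<not> ?E (f 1) (f 3)" "\<not> ?E (f 0) (f 3)"
    using r'[of 0 1] r'[of 2 3] r'[of 1 2] r'[of 0 2] r'[of 1 3] r'[of 0 3]
    by (auto simp: matching_E_def)
  have d: "f 0 \<noteq> f 2" "f 1 \<noteq> f 3" "f 0 \<noteq> f 3" "f 1 \<noteq> f 2"
    using inj_onD[OF inj, of 0 2] inj_onD[OF inj, of 1 3] inj_onD[OF inj, of 0 3] inj_onD[OF inj, of 1 2] by auto
  show False
    apply (rule four[of "f 0" "f 1" "f 2" "f 3" n m])
    using e d gE_sym gE_irr by (auto 0 3)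
qed

lemma gE_chordal: "chordal {0..<n} (gE n m)"
  unfolding chordal_def
proof (intro allI impI)
  fix vs assume "is_cycle {0..<n} (gE n m) vs \<and> 4 \<le> length vs"
  then have dist: "distinct vs" and L: "length vs \<ge> 4"
    and cyc: "\<forall>i < length vs. gE n m (vs ! i) (vs ! ((i + 1) mod length vs))"
    by (auto simp: is_cycle_def)
  define M where "M = Max (set vs)"
  have "vs \<noteq> []" using L by auto
  then have "M \<in> set vs" by (simp add: M_def)
  then obtain i where i: "i < length vs" "vs ! i = M" by (auto simp: in_set_conv_nth)
  have eM: "gE n m M (vs ! ((i + 1) mod length vs))" using cyc i by auto
  have lt: "vs ! k < M" if "k < length vs" "k \<noteq> i" for k
  proof -
    have "vs ! k \<le> M" using that by (simp add: M_def)
    moreover have "vs ! k \<noteq> vs ! i" using dist that i(1) by (simp add: nth_eq_iff_index_eq)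
    ultimately show ?thesis using i(2) by simp
  qed
  have adj: "gE n m (vs ! p) (vs ! q)" if "p < length vs" "q < length vs" "p \<noteq> i" "q \<noteq> i" "p \<noteq> q" for p q
  proof -
    have ne: "vs ! p \<noteq> vs ! q" using dist that by (simp add: nth_eq_iff_index_eq)
    have "vs ! p < M" "vs ! q < M" using lt that by auto
    then have "vs ! p < max M (vs ! ((i + 1) mod length vs))" "vs ! q < max M (vs ! ((i + 1) mod length vs))"
      by (simp_all add: less_max_iff_disj)
    then show ?thesis using clique'[OF eM ne] by blast
  qed
  show "has_chord (gE n m) vs"
  proof (cases "i = 0 \<or> i = 2")
    case True
    have m1: "(3 + 1) mod length vs \<noteq> 1"
    proof (cases "length vs = 4")
      case True then show ?thesis by simp
    next
      case False then have "length vs > 4" using L by simp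
      then show ?thesis by simp
    qed
    have m2: "(1 + 1) mod length vs = 2" using L by simp
    have e: "gE n m (vs ! 1) (vs ! 3)" using adj[of 1 3] L True by auto
    show ?thesis unfolding has_chord_def
      apply (rule exI[of _ 1], rule conjI, use L in linarith)
      apply (rule exI[of _ 3], rule conjI, use L in linarith)
      using m1 m2 e by simp
  next
    case False
    have m1: "(2 + 1) mod length vs = 3" using L by simp
    have m2: "(0 + 1) mod length vs = 1" using L by simp
    have e: "gE n m (vs ! 0) (vs ! 2)" using adj[of 0 2] L False \<open>vs \<noteq> []\<close> by auto
    show ?thesis unfolding has_chord_def
      apply (rule exI[of _ 0], rule conjI, use L in linarith)
      apply (rule exI[of _ 2], rule conjI, use L in linarith)
      using m1 m2 e by simp
  qed
qed

lemma feasible_gE: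
  assumes "\<And>n m. P {0..<n} (gE n m)"
  shows "feasible P"
  unfolding feasible_def
proof (intro allI impI)
  fix n m :: nat assume "1 \<le> n" "m \<le> n choose 2"
  moreover have "simple_graph {0..<n} (gE n m)"
    unfolding simple_graph_def using gE_sym by (auto simp: gE_def)
  ultimately show "\<exists>V E. simple_graph V E \<and> card V = n \<and> num_edges V E = m \<and> P V E"
    using num_edges_gE assms by (intro exI[of _ "{0..<n}"] exI[of _ "gE n m"]) auto
qed

theorem mainTheorem4:
  shows "(\<forall>r \<ge> 3. feasible (\<lambda>V E. induced_free V E (star_V r) (star_E r)))
       \<and> (\<forall>r \<ge> 3. feasible (\<lambda>V E. induced_free V E (path_V r) (path_E r)))
       \<and> (\<forall>r \<ge> 2. feasible (\<lambda>V E. induced_free V E (matching_V r) (matching_E r)))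
       \<and> feasible chordal"
proof (intro conjI allI impI)
  fix r :: nat assume r: "r \<ge> 3"
  show "feasible (\<lambda>V E. induced_free V E (star_V r) (star_E r))"
  proof (rule feasible_gE)
    fix n m
    show "induced_free {0..<n} (gE n m) (star_V r) (star_E r)"
      unfolding induced_free_def
      using restrict[of "{0..<n}" "gE n m" "star_V r" "star_E r" "star_V 3" "star_E 3"] no_claw r
      by (auto simp: star_V_def star_E_def)
  qed
next
  fix r :: nat assume r: "r \<ge> 3"
  show "feasible (\<lambda>V E. induced_free V E (path_V r) (path_E r))"
  proof (rule feasible_gE)
    fix n m
    show "induced_free {0..<n} (gE n m) (path_V r) (path_E r)"
      unfolding induced_free_def
      using restrict[of "{0..<n}" "gE n m" "path_V r" "path_E r" "path_V 3" "path_E 3"] no_P4 r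
      by (auto simp: path_V_def path_E_def)
  qed
next
  fix r :: nat assume r: "r \<ge> 2"
  show "feasible (\<lambda>V E. induced_free V E (matching_V r) (matching_E r))"
  proof (rule feasible_gE)
    fix n m
    show "induced_free {0..<n} (gE n m) (matching_V r) (matching_E r)"
      unfolding induced_free_def
      using restrict[of "{0..<n}" "gE n m" "matching_V r" "matching_E r" "matching_V 2" "matching_E 2"] no_2K2 r
      by (auto simp: matching_V_def matching_E_def)
  qed
next
  show "feasible chordal" using feasible_gE gE_chordal by blast
qed

end
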